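(* Let $\mathbf u$ be a uniformly recurrent infinite word over a binary alphabet $\{0,1\}$ with finite defect $D(\mathbf u)$, and let $\varphi$ be a morphism of class $P_{ret}$ defined on $\{0,1\}^*$. Then $D(\varphi(\mathbf u))$ is finite.
   Context: For a finite word $w$, $\overline w$ denotes its reversal; $w$ is a palindrome if $w=\overline w$. The defect of a finite word $w$ is $D(w)=|w|+1-(\text{number of distinct palindromic factors of } w, \text{ including the empty word})$; the defect of an infinite word is the supremum of the defects of its prefixes. An infinite word is uniformly recurrent if every factor occurs infinitely often with bounded gaps between consecutive occurrences. A morphism $\varphi:\mathcal B^*\to\mathcal A^*$ is of class $P_{ret}$ if there exists a palindrome $p\in\mathcal A^*$ such that: (a) $\varphi(b)p$ is a palindrome for every $b\in\mathcal B$; (b) for every $b\in\mathcal B$, $\varphi(b)p$ contains exactly two occurrences of $p$, one as a prefix and one as a suffix; (c) $\varphi(b)\ne\varphi(c)$ for distinct $b,c\in\mathcal B$. *)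

theory Defs
  imports Complex_Main "HOL-Library.Extended_Real"
begin

definition palindrome :: "'a list \<Rightarrow> bool" where
  "palindrome w \<longleftrightarrow> rev w = w"

definition factors :: "'a list \<Rightarrow> 'a list set" where
  "factors w = {take j (drop i w) | i j. True}"

definition pal_factors :: "'a list \<Rightarrow> 'a list set" where
  "pal_factors w = {v \<in> factors w. palindrome v}"

definition defect :: "'a list \<Rightarrow> int" where
  "defect w = int (length w) + 1 - int (card (pal_factors w))"

definition pref :: "(nat \<Rightarrow> 'a) \<Rightarrow> nat \<Rightarrow> 'a list" where
  "pref u n = map u [0..<n]"

definition defect_inf :: "(nat \<Rightarrow> 'a) \<Rightarrow> ereal" where
  "defect_inf u = (SUP n. ereal (real_of_int (defect (pref u n))))"

definition occurs_at :: "(nat \<Rightarrow> 'a) \<Rightarrow> 'a list \<Rightarrow> nat \<Rightarrow> bool" where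
  "occurs_at u w k \<longleftrightarrow> (\<forall>t<length w. u (k + t) = w ! t)"

definition uniformly_recurrent :: "(nat \<Rightarrow> 'a) \<Rightarrow> bool" where
  "uniformly_recurrent u \<longleftrightarrow>
     (\<forall>i n. \<exists>M. \<forall>j. \<exists>k. j \<le> k \<and> k \<le> j + M \<and> occurs_at u (map u [i..<i+n]) k)"

definition morph :: "('b \<Rightarrow> 'a list) \<Rightarrow> 'b list \<Rightarrow> 'a list" where
  "morph f w = concat (map f w)"

(* image of an infinite word under a non-erasing morphism *)
definition morph_inf :: "('b \<Rightarrow> 'a list) \<Rightarrow> (nat \<Rightarrow> 'b) \<Rightarrow> nat \<Rightarrow> 'a" where
  "morph_inf f u i = morph f (pref u (Suc i)) ! i"

definition occurrences :: "'a list \<Rightarrow> 'a list \<Rightarrow> nat set" where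
  "occurrences p w = {i. i + length p \<le> length w \<and> take (length p) (drop i w) = p}"

definition class_P_ret :: "('b \<Rightarrow> 'a list) \<Rightarrow> bool" where
  "class_P_ret f \<longleftrightarrow> (\<exists>p. palindrome p \<and>
     (\<forall>b. palindrome (f b @ p)) \<and>
     (\<forall>b. card (occurrences p (f b @ p)) = 2 \<and>
          occurrences p (f b @ p) = {0, length (f b)}) \<and>
     inj f)"

end

theory Submission
  imports Defs "HOL-Library.Sublist"
begin


definition lps :: "'a list \<Rightarrow> 'a list" where
  "lps w = drop (LEAST k. palindrome (drop k w)) w"

lemma palindrome_Nil[simp]: "palindrome []" by (simp add: palindrome_def)

lemma lps_ex: "\<exists>k. palindrome (drop k w)"
  by (rule exI[of _ "length w"]) simp

lemma lps_pal: "palindrome (lps w)"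
  unfolding lps_def by (rule LeastI_ex[OF lps_ex])

lemma lps_le: "(LEAST k. palindrome (drop k w)) \<le> length w"
  by (rule Least_le) simp

lemma lps_drop: "lps w = drop (length w - length (lps w)) w"
  unfolding lps_def using lps_le[of w] by simp

lemma lps_max: "palindrome (drop k w) \<Longrightarrow> length (drop k w) \<le> length (lps w)"
  unfolding lps_def using Least_le[of "\<lambda>k. palindrome (drop k w)" k] by simp

lemma lps_len: "length (lps w) \<le> length w" unfolding lps_def by simp

lemma factors_iff: "v \<in> factors w \<longleftrightarrow> (\<exists>i. i + length v \<le> length w \<and> take (length v) (drop i w) = v)"
proof
  assume "v \<in> factors w"
  then obtain i j where v: "v = take j (drop i w)" unfolding factors_def by blast
  show "\<exists>i. i + length v \<le> length w \<and> take (length v) (drop i w) = v"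
  proof (cases "i + length v \<le> length w")
    case True then show ?thesis using v by (intro exI[of _ i]) (auto simp: min_def)
  next
    case False
    show ?thesis
    proof (cases "i \<ge> length w")
      case True then have "v = []" using v by simp
      then show ?thesis by (intro exI[of _ 0]) simp
    next
      case False
      then have "length v = length w - i" using \<open>\<not> i + length v \<le> length w\<close> v by auto
      then have "v = drop i w" using v by (simp add: min_def split: if_splits)
      then show ?thesis using False by (intro exI[of _ i]) simp
    qed
  qed
next
  assume "\<exists>i. i + length v \<le> length w \<and> take (length v) (drop i w) = v"
  then obtain i where "take (length v) (drop i w) = v" by blast
  then show "v \<in> factors w" unfolding factors_def
    by (intro CollectI exI[of _ i] exI[of _ "length v"]) simp
qed

lemma factors_finite: "finite (factors w)"
proof -
  have "factors w \<subseteq> {v. set v \<subseteq> set w \<and> length v \<le> length w}"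
    unfolding factors_def by (auto dest: in_set_takeD in_set_dropD)
  moreover have "finite {v. set v \<subseteq> set w \<and> length v \<le> length w}"
    by (rule finite_lists_length_le) simp
  ultimately show ?thesis by (rule finite_subset)
qed

lemma pal_factors_finite: "finite (pal_factors w)"
  unfolding pal_factors_def using factors_finite[of w] by simp

lemma pal_snoc: "pal_factors (w @ [x]) = insert (lps (w @ [x])) (pal_factors w)"
proof -
  let ?W = "w @ [x]" let ?L = "lps ?W"
  have sub: "factors w \<subseteq> factors ?W"
  proof
    fix v assume "v \<in> factors w"
    then obtain i where "i + length v \<le> length w" "take (length v) (drop i w) = v" unfolding factors_iff by blast
    then show "v \<in> factors ?W" unfolding factors_iff by (intro exI[of _ i]) simp
  qed
  have Lf: "?L \<in> factors ?W"
    unfolding factors_iff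
  proof -
    have "drop (length ?W - length ?L) ?W = ?L" by (rule lps_drop[symmetric])
    then show "\<exists>i. i + length ?L \<le> length ?W \<and> take (length ?L) (drop i ?W) = ?L"
      using lps_len[of ?W] by (intro exI[of _ "length ?W - length ?L"]) simp
  qed
  have "pal_factors ?W \<subseteq> insert ?L (pal_factors w)"
  proof
    fix v assume "v \<in> pal_factors ?W"
    then have vf: "v \<in> factors ?W" and vp: "palindrome v" unfolding pal_factors_def by auto
    from vf obtain i where i: "i + length v \<le> length ?W" "take (length v) (drop i ?W) = v"
      unfolding factors_iff by blast
    show "v \<in> insert ?L (pal_factors w)"
    proof (cases "i + length v \<le> length w")
      case True
      then have "take (length v) (drop i w) = v" using i by simp
      then show ?thesis using True vp unfolding pal_factors_def factors_iff by blast
    next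
      case False
      then have ie: "i + length v = length ?W" using i by simp
      then have vd: "v = drop i ?W" using i by (metis add_diff_cancel_left' length_drop take_all order_refl)
      have le: "length v \<le> length ?L" using lps_max[of i ?W] vd vp by simp
      show ?thesis
      proof (cases "length v = length ?L")
        case True
        then have "i = length ?W - length ?L" using ie by simp
        then have "v = drop (length ?W - length ?L) ?W" using vd by simp
        also have "\<dots> = ?L" by (rule lps_drop[symmetric])
        finally have "v = ?L" .
        then show ?thesis by simp
      next
        case False
        define k where "k = length ?W - length ?L"
        have Ld: "?L = drop k ?W" unfolding k_def by (rule lps_drop)
        have ki: "k < i" using False le ie lps_len[of ?W] unfolding k_def by linarith
        have "v = drop (i - k) ?L" using ki by (simp add: Ld vd drop_drop del: drop_append)
        then have lv: "length v = length ?L - (i - k)" by simp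
        have "rev v = take (length ?L - (i - k)) (rev ?L)" using \<open>v = drop (i - k) ?L\<close> by (simp add: rev_drop)
        also have "rev ?L = ?L" using lps_pal[of ?W] unfolding palindrome_def .
        finally have "v = take (length v) ?L" using vp lv unfolding palindrome_def by simp
        then have "v = take (length v) (drop k ?W)" using Ld by simp
        moreover have "k + length v \<le> length w" using ki ie by simp
        ultimately have "take (length v) (drop k w) = v" by simp
        then have "v \<in> factors w" unfolding factors_iff using \<open>k + length v \<le> length w\<close> by blast
        then show ?thesis using vp unfolding pal_factors_def by simp
      qed
    qed
  qed
  moreover have "insert ?L (pal_factors w) \<subseteq> pal_factors ?W"
    using sub Lf lps_pal[of ?W] unfolding pal_factors_def by auto
  ultimately show ?thesis by blast
qed


lemma defect_snoc:
  "defect (w @ [x]) = defect w + (if lps (w @ [x]) \<in> factors w then 1 else 0)"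
proof -
  have "lps (w @ [x]) \<in> pal_factors w \<longleftrightarrow> lps (w @ [x]) \<in> factors w"
    using lps_pal unfolding pal_factors_def by auto
  then show ?thesis
    unfolding defect_def pal_snoc using pal_factors_finite[of w] by (auto simp: card_insert_if)
qed

definition good :: "(nat \<Rightarrow> 'a) \<Rightarrow> nat \<Rightarrow> bool" where
  "good g N \<longleftrightarrow> (\<forall>m\<ge>N. lps (pref g (Suc m)) \<notin> factors (pref g m))"

lemma pref_Suc: "pref g (Suc m) = pref g m @ [g m]" by (simp add: pref_def)

lemma defect_pref_Suc: "defect (pref g (Suc m)) = defect (pref g m) +
   (if lps (pref g (Suc m)) \<in> factors (pref g m) then 1 else 0)"
  unfolding pref_Suc by (rule defect_snoc)

lemma defect_pref_mono: "n \<le> m \<Longrightarrow> defect (pref g n) \<le> defect (pref g m)"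
proof (induction m)
  case 0 then show ?case by simp
next
  case (Suc m) then show ?case using defect_pref_Suc[of g m] by (cases "n = Suc m") auto
qed


lemma factors_Nil: "factors [] = {[]}" unfolding factors_def by auto

lemma defect_Nil: "defect [] = 0"
proof -
  have e: "pal_factors [] = {[]}" unfolding pal_factors_def factors_Nil by auto
  show ?thesis unfolding defect_def e by simp
qed

lemma finite_defect_good:
  assumes "defect_inf g < \<infinity>" shows "\<exists>N. good g N"
proof (rule ccontr)
  assume "\<nexists>N. good g N"
  then have bad: "\<forall>N. \<exists>m\<ge>N. lps (pref g (Suc m)) \<in> factors (pref g m)" unfolding good_def by auto
  have ex: "\<exists>n. defect (pref g n) \<ge> int k" for k
  proof (induction k)
    case 0
    have "defect (pref g 0) = 0" unfolding pref_def using defect_Nil by simp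
    then show ?case by (intro exI[of _ 0]) simp
  next
    case (Suc k)
    then obtain n where n: "defect (pref g n) \<ge> int k" by blast
    obtain m where m: "m \<ge> n" "lps (pref g (Suc m)) \<in> factors (pref g m)" using bad by blast
    have e: "defect (pref g (Suc m)) = defect (pref g m) + 1" using defect_pref_Suc[of g m] m(2) by simp
    have "defect (pref g n) \<le> defect (pref g m)" using defect_pref_mono[OF m(1)] .
    then have "defect (pref g (Suc m)) \<ge> int (Suc k)" using e n by simp
    then show ?case by blast
  qed
  have big: "defect_inf g \<ge> ereal (real k)" for k
  proof -
    obtain n where n: "defect (pref g n) \<ge> int k" using ex by blast
    have "ereal (real k) \<le> ereal (real_of_int (defect (pref g n)))" using n by simp
    also have "\<dots> \<le> defect_inf g" unfolding defect_inf_def by (rule SUP_upper) simp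
    finally show ?thesis .
  qed
  have "defect_inf g \<ge> ereal (real 0)" by (rule big)
  then obtain r where r: "defect_inf g = ereal r" using assms by (cases "defect_inf g") auto
  have "ereal (real (nat (ceiling r) + 1)) \<le> ereal r" using big[of "nat (ceiling r) + 1"] r by simp
  then have "real (nat (ceiling r) + 1) \<le> r" by simp
  moreover have "r \<le> real (nat (ceiling r))" by linarith
  ultimately show False by simp
qed

lemma good_finite_defect:
  assumes "good g N" shows "defect_inf g < \<infinity>"
proof -
  have c: "defect (pref g (N + d)) = defect (pref g N)" for d
  proof (induction d)
    case 0 then show ?case by simp
  next
    case (Suc d)
    have "lps (pref g (Suc (N + d))) \<notin> factors (pref g (N + d))" using assms unfolding good_def by simp
    then show ?case using defect_pref_Suc[of g "N + d"] Suc by simp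
  qed
  have "defect (pref g m) \<le> defect (pref g N)" for m
  proof (cases "m \<le> N")
    case True then show ?thesis by (rule defect_pref_mono)
  next
    case False
    then obtain d where "m = N + d" by (metis le_add_diff_inverse nat_le_linear)
    then show ?thesis using c by simp
  qed
  then have "defect_inf g \<le> ereal (real_of_int (defect (pref g N)))"
    unfolding defect_inf_def by (intro SUP_least) simp
  moreover have "ereal (real_of_int (defect (pref g N))) < \<infinity>" by simp
  ultimately show ?thesis by (rule order.strict_trans1)
qed


definition seg :: "(nat \<Rightarrow> 'a) \<Rightarrow> nat \<Rightarrow> nat \<Rightarrow> 'a list" where
  "seg g x l = map (\<lambda>t. g (x + t)) [0..<l]"

lemma length_seg[simp]: "length (seg g x l) = l" by (simp add: seg_def)
lemma nth_seg[simp]: "t < l \<Longrightarrow> seg g x l ! t = g (x + t)" by (simp add: seg_def)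
lemma seg_0[simp]: "seg g x 0 = []" by (simp add: seg_def)

lemma seg_eq_iff: "seg g x l = v \<longleftrightarrow> length v = l \<and> (\<forall>t<l. g (x + t) = v ! t)"
  unfolding list_eq_iff_nth_eq by (simp add: eq_commute)

lemma seg_add: "seg g x (a + b) = seg g x a @ seg g (x + a) b"
  by (rule nth_equalityI) (simp_all add: nth_append add.assoc)

lemma take_seg: "q \<le> l \<Longrightarrow> take q (seg g x l) = seg g x q"
  by (rule nth_equalityI) simp_all

lemma drop_seg: "r \<le> l \<Longrightarrow> drop r (seg g x l) = seg g (x + r) (l - r)"
  by (rule nth_equalityI) (simp_all add: add.assoc)

lemma pref_seg: "pref g n = seg g 0 n"
  by (rule nth_equalityI) (simp_all add: pref_def)

lemma seg_cong: "(\<And>t. t < l \<Longrightarrow> g (x + t) = h (y + t)) \<Longrightarrow> seg g x l = seg h y l"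
  by (rule nth_equalityI) simp_all

lemma palindrome_nth: "palindrome v \<longleftrightarrow> (\<forall>t<length v. v ! t = v ! (length v - 1 - t))"
proof -
  have "palindrome v \<longleftrightarrow> (\<forall>t<length v. rev v ! t = v ! t)"
    unfolding palindrome_def list_eq_iff_nth_eq by simp
  also have "\<dots> \<longleftrightarrow> (\<forall>t<length v. v ! (length v - 1 - t) = v ! t)"
    by (simp add: rev_nth)
  also have "\<dots> \<longleftrightarrow> (\<forall>t<length v. v ! t = v ! (length v - 1 - t))"
    by (blast intro: sym)
  finally show ?thesis .
qed

lemma pal_seg_iff: "palindrome (seg g x l) \<longleftrightarrow> (\<forall>t<l. g (x + t) = g (x + (l - 1 - t)))"
proof -
  have "\<forall>t<l. (seg g x l ! t = seg g x l ! (l - 1 - t)) = (g (x + t) = g (x + (l - 1 - t)))"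
    by simp
  then show ?thesis unfolding palindrome_nth length_seg by blast
qed


lemma pal_split:
  assumes "palindrome (a @ M @ c)" "length a = length c"
  shows "palindrome M" "c = rev a"
proof -
  have e: "rev c @ rev M @ rev a = a @ M @ c" using assms(1) unfolding palindrome_def by simp
  have "rev c = a \<and> rev M @ rev a = M @ c"
    using append_eq_append_conv[of "rev c" a "rev M @ rev a" "M @ c"] e assms(2) by simp
  then have 2: "rev M @ rev a = M @ c" by blast
  have "rev M = M \<and> rev a = c"
    using append_eq_append_conv[of "rev M" M "rev a" c] 2 assms(2) by simp
  then show "palindrome M" "c = rev a" unfolding palindrome_def by auto
qed

lemma pal_append3:
  assumes "palindrome M" shows "palindrome (a @ M @ rev a)"
  using assms unfolding palindrome_def by simp

lemma factors_pref: "v \<in> factors (pref g m) \<longleftrightarrow> (\<exists>x. x + length v \<le> m \<and> seg g x (length v) = v)"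
proof -
  have e: "take (length v) (drop x (pref g m)) = seg g x (length v)" if "x + length v \<le> m" for x
    using that unfolding pref_seg by (simp add: drop_seg take_seg)
  have l: "length (pref g m) = m" by (simp add: pref_def)
  show ?thesis unfolding factors_iff l
  proof
    assume "\<exists>i. i + length v \<le> m \<and> take (length v) (drop i (pref g m)) = v"
    then obtain i where "i + length v \<le> m" "take (length v) (drop i (pref g m)) = v" by blast
    then show "\<exists>x. x + length v \<le> m \<and> seg g x (length v) = v" using e by metis
  next
    assume "\<exists>x. x + length v \<le> m \<and> seg g x (length v) = v"
    then obtain i where "i + length v \<le> m" "seg g i (length v) = v" by blast
    then show "\<exists>i. i + length v \<le> m \<and> take (length v) (drop i (pref g m)) = v" using e by metis
  qed
qed

lemma factors_pref_mono: "a \<le> b \<Longrightarrow> v \<in> factors (pref g a) \<Longrightarrow> v \<in> factors (pref g b)"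
  unfolding factors_pref by (meson le_trans)

lemma lps_pref:
  fixes g n
  defines "L \<equiv> length (lps (pref g n))"
  shows "L \<le> n" "lps (pref g n) = seg g (n - L) L" "palindrome (seg g (n - L) L)"
    "\<And>y. y \<le> n \<Longrightarrow> palindrome (seg g y (n - y)) \<Longrightarrow> n - y \<le> L"
proof -
  have l: "length (pref g n) = n" by (simp add: pref_def)
  show Ln: "L \<le> n" unfolding L_def using lps_len[of "pref g n"] l by simp
  have d: "lps (pref g n) = drop (n - L) (pref g n)" using lps_drop[of "pref g n"] unfolding L_def l .
  have "drop (n - L) (pref g n) = seg g (n - L) L" unfolding pref_seg using Ln by (simp add: drop_seg)
  then show e: "lps (pref g n) = seg g (n - L) L" using d by simp
  show "palindrome (seg g (n - L) L)" using lps_pal[of "pref g n"] unfolding e .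
  fix y assume "y \<le> n" "palindrome (seg g y (n - y))"
  then have "palindrome (drop y (pref g n))" unfolding pref_seg by (simp add: drop_seg)
  from lps_max[OF this] show "n - y \<le> L" unfolding L_def l by (simp add: pref_def)
qed


lemma morph_Nil[simp]: "morph f [] = []" by (simp add: morph_def)
lemma morph_Cons[simp]: "morph f (b # w) = f b @ morph f w" by (simp add: morph_def)
lemma morph_append[simp]: "morph f (w @ v) = morph f w @ morph f v" by (simp add: morph_def)

locale pret =
  fixes f :: "bool \<Rightarrow> 'a list" and p :: "'a list"
  assumes pal_p: "palindrome p" and pal_fp: "\<And>b. palindrome (f b @ p)"
    and occ_f: "\<And>b. occurrences p (f b @ p) = {0, length (f b)}"
    and inj_f: "inj f" and ne_f: "\<And>b. f b \<noteq> []"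
begin

lemma rev_p: "rev p = p" using pal_p unfolding palindrome_def .

lemma fb_p: "f b @ p = p @ rev (f b)"
proof -
  have "rev (f b @ p) = f b @ p" using pal_fp[of b] unfolding palindrome_def .
  then show ?thesis using rev_p by simp
qed

lemma morph_len: "length (morph f w) \<ge> length w"
proof (induction w)
  case Nil then show ?case by simp
next
  case (Cons b w)
  have "length (f b) \<ge> 1" using ne_f[of b] by (cases "f b") auto
  then show ?case using Cons by simp
qed

lemma morph_p: "morph f w @ p = p @ rev (morph f (rev w))"
proof (induction w)
  case Nil then show ?case by simp
next
  case (Cons b w)
  have "morph f (b # w) @ p = f b @ (morph f w @ p)" by simp
  also have "\<dots> = (f b @ p) @ rev (morph f (rev w))" using Cons by simp
  also have "\<dots> = p @ rev (f b) @ rev (morph f (rev w))" using fb_p by simp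
  also have "\<dots> = p @ rev (morph f (rev (b # w)))" by simp
  finally show ?case .
qed

lemma rev_morph_p: "rev (morph f w @ p) = morph f (rev w) @ p"
  using morph_p[of "rev w"] rev_p by simp

lemma occ_lemma:
  assumes "d + length p \<le> length (f c @ p)" "take (length p) (drop d (f c @ p)) = p"
  shows "d = 0 \<or> d = length (f c)"
proof -
  have "d \<in> occurrences p (f c @ p)" using assms unfolding occurrences_def by simp
  then show ?thesis using occ_f[of c] by auto
qed

lemma occ_lemma2:
  assumes "take (length (f b) + length p) (f c @ p) = f b @ p" "length (f b) < length (f c)"
  shows False
proof -
  have "take (length p) (drop (length (f b)) (f c @ p)) = drop (length (f b)) (take (length (f b) + length p) (f c @ p))"
    by (metis take_drop add.commute)
  also have "\<dots> = p" using assms(1) by simp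
  finally have "length (f b) = 0 \<or> length (f b) = length (f c)"
    using assms(2) by (intro occ_lemma) simp_all
  then show False using ne_f[of b] assms(2) by simp
qed

lemma pref_decode: "prefix (morph f w @ p) (morph f v @ p) \<Longrightarrow> prefix w v"
proof (induction w arbitrary: v)
  case Nil then show ?case by simp
next
  case (Cons b w)
  obtain z where z: "morph f v @ p = f b @ morph f w @ p @ z"
    using Cons.prems unfolding prefix_def by auto
  show ?case
  proof (cases v)
    case Nil
    have "length (morph f v @ p) = length (f b @ morph f w @ p @ z)" using z by simp
    then have "length (f b) = 0" using Nil by simp
    then show ?thesis using ne_f[of b] by simp
  next
    case (Cons c v')
    obtain x1 where x1: "morph f w @ p = p @ x1" using morph_p by blast
    obtain y1 where y1: "morph f v' @ p = p @ y1" using morph_p by blast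
    have H: "f c @ p @ y1 = f b @ p @ x1 @ z" using z x1 y1 Cons by simp
    have ne: "length (f b) = length (f c)"
    proof (rule ccontr)
      assume "length (f b) \<noteq> length (f c)"
      then consider "length (f b) < length (f c)" | "length (f c) < length (f b)" by linarith
      then show False
      proof cases
        case 1
        have "take (length (f b) + length p) (f c @ p @ y1) = f b @ p"
          unfolding H by simp
        moreover have "take (length (f b) + length p) (f c @ p @ y1) = take (length (f b) + length p) (f c @ p)"
          using 1 by simp
        ultimately show False using occ_lemma2[OF _ 1] by simp
      next
        case 2
        have "take (length (f c) + length p) (f b @ p @ x1 @ z) = f c @ p"
          unfolding H[symmetric] by simp
        moreover have "take (length (f c) + length p) (f b @ p @ x1 @ z) = take (length (f c) + length p) (f b @ p)"
          using 2 by simp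
        ultimately show False using occ_lemma2[OF _ 2] by simp
      qed
    qed
    then have "f c = f b" using append_eq_append_conv[of "f c" "f b" "p @ y1" "p @ x1 @ z"] H by simp
    then have cb: "c = b" using inj_f by (simp add: inj_eq)
    have "prefix (f b @ (morph f w @ p)) (f b @ (morph f v' @ p))"
      using Cons.prems \<open>v = c # v'\<close> cb by simp
    then have "prefix (morph f w @ p) (morph f v' @ p)" by simp
    then have "prefix w v'" by (rule Cons.IH)
    then show ?thesis using \<open>v = c # v'\<close> cb by simp
  qed
qed

lemma morph_inj: "morph f w @ p = morph f v @ p \<Longrightarrow> w = v"
  using pref_decode[of w v] pref_decode[of v w] by (simp add: prefix_order.antisym)

lemma pal_morph: "palindrome (morph f w @ p) \<longleftrightarrow> palindrome w"
proof
  assume "palindrome (morph f w @ p)"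
  then have "morph f (rev w) @ p = morph f w @ p" using rev_morph_p unfolding palindrome_def by simp
  then show "palindrome w" unfolding palindrome_def by (rule morph_inj)
next
  assume "palindrome w"
  then show "palindrome (morph f w @ p)" using rev_morph_p unfolding palindrome_def by simp
qed

end


locale pret_u = pret +
  fixes u :: "nat \<Rightarrow> bool"
begin

definition U where "U = morph_inf f u"
definition bb where "bb k = length (morph f (pref u k))"

lemma pref_add: "pref u (a + d) = pref u a @ seg u a d"
  unfolding pref_seg by (rule seg_add[of u 0 a d, simplified])

lemma seg_one: "seg g k (Suc 0) = [g k]" by (simp add: seg_def)

lemma bb_add: "bb (a + d) = bb a + length (morph f (seg u a d))"
  unfolding bb_def pref_add by simp

lemma bb_Suc: "bb (Suc k) = bb k + length (f (u k))"
  using bb_add[of k 1] by (simp add: seg_one)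

lemma bb_0[simp]: "bb 0 = 0" by (simp add: bb_def pref_def)

lemma f_pos: "length (f b) > 0" using ne_f[of b] by simp

lemma bb_ge: "bb k \<ge> k"
proof (induction k)
  case 0 then show ?case by simp
next
  case (Suc k) then show ?case using f_pos[of "u k"] bb_Suc[of k] by linarith
qed

lemma bb_less: "a < b \<Longrightarrow> bb a < bb b"
proof (induction b)
  case 0 then show ?case by simp
next
  case (Suc b) then show ?case using f_pos[of "u b"] by (cases "a = b") (auto simp: bb_Suc)
qed

lemma bb_mono: "a \<le> b \<Longrightarrow> bb a \<le> bb b" using bb_less[of a b] by (cases "a = b") auto

lemma bb_le_iff: "bb a \<le> bb b \<longleftrightarrow> a \<le> b"
  by (meson bb_less bb_mono not_le)

lemma bb_less_iff: "bb a < bb b \<longleftrightarrow> a < b"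
  by (meson bb_less bb_mono not_le)

lemma bb_eq_iff: "bb a = bb b \<longleftrightarrow> a = b"
  by (metis bb_less less_irrefl nat_neq_iff)

definition Kf where "Kf = max (length (f True)) (length (f False))"

lemma f_le_K: "length (f b) \<le> Kf" unfolding Kf_def by (cases b) auto

lemma K_pos: "Kf \<ge> 1" using f_pos[of True] f_le_K[of True] by linarith

lemma bb_diff_le: "bb (a + d) \<le> bb a + Kf * d"
proof (induction d)
  case 0 then show ?case by simp
next
  case (Suc d)
  have "bb (a + Suc d) = bb (a + d) + length (f (u (a + d)))" using bb_Suc[of "a + d"] by simp
  then show ?case using Suc f_le_K[of "u (a + d)"] by simp
qed

lemma bb_le_K: "bb k \<le> Kf * k" using bb_diff_le[of 0 k] by simp

lemma nth_pref_morph: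
  assumes "x < bb k" "k \<le> M"
  shows "morph f (pref u M) ! x = morph f (pref u k) ! x"
proof -
  have "pref u M = pref u k @ seg u k (M - k)" using pref_add[of k "M - k"] assms(2) by simp
  then show ?thesis using assms(1) unfolding bb_def by (simp add: nth_append)
qed

lemma UK: "x < bb k \<Longrightarrow> U x = morph f (pref u k) ! x"
proof -
  assume x: "x < bb k"
  have x2: "x < bb (Suc x)" using bb_ge[of "Suc x"] by simp
  have "U x = morph f (pref u (Suc x)) ! x" unfolding U_def morph_inf_def by simp
  also have "\<dots> = morph f (pref u (max k (Suc x))) ! x"
    using nth_pref_morph[OF x2, of "max k (Suc x)"] by simp
  also have "\<dots> = morph f (pref u k) ! x" using nth_pref_morph[OF x, of "max k (Suc x)"] by simp
  finally show ?thesis .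
qed

lemma BC: "t < length (morph f (seg u k n)) \<Longrightarrow> U (bb k + t) = morph f (seg u k n) ! t"
proof -
  assume t: "t < length (morph f (seg u k n))"
  have "bb k + t < bb (k + n)" using t bb_add[of k n] by simp
  then have "U (bb k + t) = morph f (pref u (k + n)) ! (bb k + t)" by (rule UK)
  also have "\<dots> = (morph f (pref u k) @ morph f (seg u k n)) ! (bb k + t)" unfolding pref_add by simp
  also have "\<dots> = morph f (seg u k n) ! t" unfolding bb_def by (simp add: nth_append)
  finally show ?thesis .
qed

lemma B2: "t < length p \<Longrightarrow> U (bb k + t) = p ! t"
proof -
  assume t: "t < length p"
  let ?Z = "morph f (seg u k (length p))"
  have lz: "length ?Z \<ge> length p" using morph_len[of "seg u k (length p)"] by simp
  have "U (bb k + t) = ?Z ! t" using t lz by (intro BC) simp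
  also have "\<dots> = (?Z @ p) ! t" using t lz by (simp add: nth_append)
  also have "\<dots> = (p @ rev (morph f (rev (seg u k (length p))))) ! t" by (simp only: morph_p)
  also have "\<dots> = p ! t" using t by (simp add: nth_append)
  finally show ?thesis .
qed

lemma BCP: "t < length (morph f (seg u k n)) + length p \<Longrightarrow>
    U (bb k + t) = (morph f (seg u k n) @ p) ! t"
proof (cases "t < length (morph f (seg u k n))")
  case True then show ?thesis by (simp add: BC nth_append)
next
  case False
  assume t: "t < length (morph f (seg u k n)) + length p"
  let ?l = "length (morph f (seg u k n))"
  have "U (bb k + t) = U (bb (k + n) + (t - ?l))" using False bb_add[of k n] by simp
  also have "\<dots> = p ! (t - ?l)" using t False by (intro B2) simp
  finally show ?thesis using False by (simp add: nth_append)
qed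

lemma blockseg: "seg U (bb k) (length (morph f (seg u k n)) + length p) = morph f (seg u k n) @ p"
  unfolding seg_eq_iff using BCP by simp

lemma blk1: "t < length (f (u k)) + length p \<Longrightarrow> U (bb k + t) = (f (u k) @ p) ! t"
  using BCP[of t k 1] by (simp add: seg_one)

lemma blk_find: "\<exists>k. bb k \<le> x \<and> x < bb (Suc k)"
proof -
  have ex: "\<exists>k. x < bb (Suc k)" using bb_ge[of "Suc x"] by (intro exI[of _ x]) simp
  define k where "k = (LEAST k. x < bb (Suc k))"
  have 1: "x < bb (Suc k)" unfolding k_def by (rule LeastI_ex[OF ex])
  have 2: "bb k \<le> x"
  proof (cases k)
    case 0 then show ?thesis by simp
  next
    case (Suc k')
    then have "\<not> x < bb (Suc k')" unfolding k_def using not_less_Least[of k' "\<lambda>k. x < bb (Suc k)"]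
      by (metis k_def lessI)
    then show ?thesis using Suc by simp
  qed
  from 1 2 show ?thesis by blast
qed

definition occU where "occU x \<longleftrightarrow> (\<forall>t<length p. U (x + t) = p ! t)"

lemma occ_bb: "occU (bb k)" unfolding occU_def using B2 by simp

lemma sync: "occU x \<Longrightarrow> \<exists>k. x = bb k"
proof -
  assume oc: "occU x"
  obtain k where k: "bb k \<le> x" "x < bb (Suc k)" using blk_find by blast
  show ?thesis
  proof (cases "x = bb k")
    case True then show ?thesis by blast
  next
    case False
    define d where "d = x - bb k"
    have d: "0 < d" "d < length (f (u k))" using k False bb_Suc[of k] unfolding d_def by auto
    have "take (length p) (drop d (f (u k) @ p)) = p"
    proof (rule nth_equalityI)
      show "length (take (length p) (drop d (f (u k) @ p))) = length p" using d by simp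
      fix t assume "t < length (take (length p) (drop d (f (u k) @ p)))"
      then have t: "t < length p" by simp
      have "take (length p) (drop d (f (u k) @ p)) ! t = drop d (f (u k) @ p) ! t" by (rule nth_take[OF t])
      also have "\<dots> = (f (u k) @ p) ! (d + t)" using d by (intro nth_drop) simp
      also have "\<dots> = U (bb k + (d + t))" using t d by (intro blk1[symmetric]) simp
      also have "\<dots> = U (x + t)" using k unfolding d_def by simp
      also have "\<dots> = p ! t" using oc t unfolding occU_def by simp
      finally show "take (length p) (drop d (f (u k) @ p)) ! t = p ! t" .
    qed
    then have "d = 0 \<or> d = length (f (u k))" using d by (intro occ_lemma) simp_all
    then show ?thesis using d by simp
  qed
qed

lemma decode:
  assumes "seg U (bb i) (length (morph f w) + length p) = morph f w @ p"
  shows "seg u i (length w) = w"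
proof -
  define n where "n = length (morph f w) + length p"
  define v where "v = seg u i n"
  have lv: "length (morph f v) \<ge> n" using morph_len[of v] unfolding v_def by simp
  have wn: "length w \<le> n" using morph_len[of w] unfolding n_def by simp
  have "seg U (bb i) (length (morph f v) + length p) = morph f v @ p"
    unfolding v_def by (rule blockseg)
  then have "take n (morph f v @ p) = seg U (bb i) n"
    using lv by (metis take_seg le_add1 le_trans)
  then have "take n (morph f v @ p) = morph f w @ p" using assms unfolding n_def by simp
  then have "prefix (morph f w @ p) (morph f v @ p)" by (metis take_is_prefix)
  then have "prefix w v" by (rule pref_decode)
  then have "take (length w) v = w" by (metis append_eq_conv_conj prefix_def)
  then show ?thesis unfolding v_def using wn by (simp add: take_seg)
qed

lemma last_block: "s \<le> length (f (u k)) \<Longrightarrow>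
    seg U (bb (Suc k) - s) s = drop (length (f (u k)) - s) (f (u k))"
proof -
  assume s: "s \<le> length (f (u k))"
  have e: "bb (Suc k) - s = bb k + (length (f (u k)) - s)" using bb_Suc[of k] s by simp
  show ?thesis unfolding e seg_eq_iff
  proof (intro conjI allI impI)
    show "length (drop (length (f (u k)) - s) (f (u k))) = s" using s by simp
    fix t assume t: "t < s"
    have "U (bb k + (length (f (u k)) - s) + t) = U (bb k + (length (f (u k)) - s + t))" by (simp add: add.assoc)
    also have "\<dots> = (f (u k) @ p) ! (length (f (u k)) - s + t)" using t s by (intro blk1) simp
    also have "\<dots> = f (u k) ! (length (f (u k)) - s + t)"
    proof -
      have q: "length (f (u k)) - s + t < length (f (u k))" using t s by linarith
      show ?thesis by (simp only: nth_append q if_True)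
    qed
    also have "\<dots> = drop (length (f (u k)) - s) (f (u k)) ! t" using t s by (intro nth_drop[symmetric]) simp
    finally show "U (bb k + (length (f (u k)) - s) + t) = drop (length (f (u k)) - s) (f (u k)) ! t" .
  qed
qed

lemma after_p: "s \<le> length (f (u k)) \<Longrightarrow> seg U (bb k + length p) s = take s (rev (f (u k)))"
proof -
  assume s: "s \<le> length (f (u k))"
  show ?thesis unfolding seg_eq_iff
  proof (intro conjI allI impI)
    show "length (take s (rev (f (u k)))) = s" using s by simp
    fix t assume t: "t < s"
    have "U (bb k + length p + t) = U (bb k + (length p + t))" by (simp add: add.assoc)
    also have "\<dots> = (f (u k) @ p) ! (length p + t)" using t s by (intro blk1) simp
    also have "\<dots> = (p @ rev (f (u k))) ! (length p + t)" by (simp only: fb_p)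
    also have "\<dots> = take s (rev (f (u k))) ! t" using t s by (simp add: nth_append)
    finally show "U (bb k + length p + t) = take s (rev (f (u k))) ! t" .
  qed
qed

lemma con:
  assumes ij: "i \<le> j" and py: "palindrome (seg u i (j - i))" and s: "s \<le> bb i"
    and r: "seg U (bb j + length p) s = rev (seg U (bb i - s) s)"
  shows "palindrome (seg U (bb i - s) (bb j - bb i + length p + 2 * s))"
proof -
  have bj: "bb j = bb i + length (morph f (seg u i (j - i)))" using bb_add[of i "j - i"] ij by simp
  have M: "seg U (bb i) (bb j - bb i + length p) = morph f (seg u i (j - i)) @ p"
    using blockseg[of i "j - i"] bj by simp
  have pM: "palindrome (seg U (bb i) (bb j - bb i + length p))" unfolding M pal_morph by (rule py)
  have "seg U (bb i - s) (s + ((bb j - bb i + length p) + s)) =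
     seg U (bb i - s) s @ seg U (bb i) (bb j - bb i + length p) @ seg U (bb j + length p) s"
    using s bj by (simp add: seg_add add.assoc)
  also have "\<dots> = seg U (bb i - s) s @ seg U (bb i) (bb j - bb i + length p) @ rev (seg U (bb i - s) s)"
    using r by simp
  finally have e: "seg U (bb i - s) (s + ((bb j - bb i + length p) + s)) =
     seg U (bb i - s) s @ seg U (bb i) (bb j - bb i + length p) @ rev (seg U (bb i - s) s)" .
  have ls: "bb j - bb i + length p + 2 * s = s + ((bb j - bb i + length p) + s)" by simp
  show ?thesis unfolding ls e by (rule pal_append3[OF pM])
qed

end


lemma pal_inner:
  assumes "palindrome (seg g x n)" "n \<ge> 2"
  shows "palindrome (seg g (Suc x) (n - 2))" "g (x + (n - 1)) = g x"
proof -
  have H: "\<And>t. t < n \<Longrightarrow> g (x + t) = g (x + (n - 1 - t))" using assms(1) unfolding pal_seg_iff by blast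
  show "palindrome (seg g (Suc x) (n - 2))" unfolding pal_seg_iff
  proof (intro allI impI)
    fix t assume t: "t < n - 2"
    have "g (Suc x + t) = g (x + (t + 1))" by simp
    also have "\<dots> = g (x + (n - 1 - (t + 1)))" using H[of "t + 1"] t by simp
    also have "\<dots> = g (Suc x + (n - 2 - 1 - t))" by (rule arg_cong[where f=g]) (use t in arith)
    finally show "g (Suc x + t) = g (Suc x + (n - 2 - 1 - t))" .
  qed
  show "g (x + (n - 1)) = g x" using H[of 0] assms(2) by simp
qed

lemma pal_outer:
  assumes "palindrome (seg g (Suc x) n)" "g x = g (Suc x + n)"
  shows "palindrome (seg g x (n + 2))"
proof -
  have H: "\<And>t. t < n \<Longrightarrow> g (Suc x + t) = g (Suc x + (n - 1 - t))" using assms(1) unfolding pal_seg_iff by blast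
  show ?thesis unfolding pal_seg_iff
  proof (intro allI impI)
    fix t assume t: "t < n + 2"
    consider "t = 0" | "t = n + 1" | "0 < t \<and> t \<le> n" using t by linarith
    then show "g (x + t) = g (x + (n + 2 - 1 - t))"
    proof cases
      case 1 then show ?thesis using assms(2) by simp
    next
      case 2 then show ?thesis using assms(2) by simp
    next
      case 3
      have "g (x + t) = g (Suc x + (t - 1))" by (rule arg_cong[where f=g]) (use 3 in arith)
      also have "\<dots> = g (Suc x + (n - 1 - (t - 1)))" using H[of "t - 1"] 3 by linarith
      also have "\<dots> = g (x + (n + 2 - 1 - t))" by (rule arg_cong[where f=g]) (use 3 in arith)
      finally show ?thesis .
    qed
  qed
qed

lemma pal_suffix_prefix:
  assumes "palindrome (seg g x n)" "q \<le> n" "palindrome (seg g (x + (n - q)) q)"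
  shows "seg g x q = seg g (x + (n - q)) q"
proof (rule seg_cong)
  fix t assume t: "t < q"
  have H: "\<And>t. t < n \<Longrightarrow> g (x + t) = g (x + (n - 1 - t))" using assms(1) unfolding pal_seg_iff by blast
  have H2: "\<And>t. t < q \<Longrightarrow> g (x + (n - q) + t) = g (x + (n - q) + (q - 1 - t))" using assms(3) unfolding pal_seg_iff by blast
  have "g (x + t) = g (x + (n - 1 - t))" using H[of t] t assms(2) by simp
  also have "\<dots> = g (x + (n - q) + (q - 1 - t))" by (rule arg_cong[where f=g]) (use t assms(2) in arith)
  also have "\<dots> = g (x + (n - q) + (q - 1 - (q - 1 - t)))" using H2[of "q - 1 - t"] t by linarith
  also have "\<dots> = g (x + (n - q) + t)" by (rule arg_cong[where f=g]) (use t in arith)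
  finally show "g (x + t) = g (x + (n - q) + t)" .
qed

lemma pal_prefix_suffix:
  assumes "palindrome (seg g x n)" "q \<le> n" "palindrome (seg g x q)"
  shows "palindrome (seg g (x + (n - q)) q)"
  unfolding pal_seg_iff
proof (intro allI impI)
  fix t assume t: "t < q"
  have H: "\<And>t. t < n \<Longrightarrow> g (x + t) = g (x + (n - 1 - t))" using assms(1) unfolding pal_seg_iff by blast
  have H2: "\<And>t. t < q \<Longrightarrow> g (x + t) = g (x + (q - 1 - t))" using assms(3) unfolding pal_seg_iff by blast
  have "g (x + (n - q) + t) = g (x + (n - q + t))" by (simp add: add.assoc)
  also have "\<dots> = g (x + (n - 1 - (n - q + t)))" using H[of "n - q + t"] t assms(2) by linarith
  also have "\<dots> = g (x + (q - 1 - t))" by (rule arg_cong[where f=g]) (use t assms(2) in arith)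
  also have "\<dots> = g (x + (q - 1 - (q - 1 - t)))" using H2[of "q - 1 - t"] t by linarith
  also have "\<dots> = g (x + t)" by (rule arg_cong[where f=g]) (use t in arith)
  also have "\<dots> = g (x + (n - 1 - t))" using H[of t] t assms(2) by linarith
  also have "\<dots> = g (x + (n - q) + (q - 1 - t))" by (rule arg_cong[where f=g]) (use t assms(2) in arith)
  finally show "g (x + (n - q) + t) = g (x + (n - q) + (q - 1 - t))" .
qed

lemma lps_factor: "lps (pref g n) \<in> factors (pref g n)"
  unfolding factors_pref using lps_pref(1,2)[where g=g and n=n]
  by (intro exI[of _ "n - length (lps (pref g n))"]) simp

context pret_u
begin

lemma bb_diff_ge: "bb (a + d) \<ge> bb a + d"
  using bb_add[of a d] morph_len[of "seg u a d"] by simp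

lemma first_occ: "\<exists>i s. x0 + s = bb i \<and> (s = 0 \<or> (0 < i \<and> s < length (f (u (i - 1)))))
    \<and> (\<forall>t<s. \<not> occU (x0 + t)) \<and> s < Kf"
proof -
  obtain k where k: "bb k \<le> x0" "x0 < bb (Suc k)" using blk_find by blast
  show ?thesis
  proof (cases "bb k = x0")
    case True then show ?thesis using K_pos by (intro exI[of _ k] exI[of _ 0]) auto
  next
    case False
    define s where "s = bb (Suc k) - x0"
    have s: "x0 + s = bb (Suc k)" "0 < s" "s < length (f (u k))"
      using k False bb_Suc[of k] unfolding s_def by auto
    have no: "\<not> occU (x0 + t)" if "t < s" for t
    proof
      assume "occU (x0 + t)"
      then obtain k' where "x0 + t = bb k'" using sync by blast
      then have "bb k < bb k'" "bb k' < bb (Suc k)" using k False that s by auto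
      then show False unfolding bb_less_iff by simp
    qed
    show ?thesis using s no f_le_K[of "u k"] by (intro exI[of _ "Suc k"] exI[of _ s]) auto
  qed
qed

lemma pal_sym_occ:
  assumes "palindrome (seg U x l)" "occU (x + t)" "t + length p \<le> l"
  shows "occU (x + (l - length p - t))"
  unfolding occU_def
proof (intro allI impI)
  fix r assume r: "r < length p"
  have H: "\<And>t. t < l \<Longrightarrow> U (x + t) = U (x + (l - 1 - t))" using assms(1) unfolding pal_seg_iff by blast
  have pp: "\<And>t. t < length p \<Longrightarrow> p ! t = p ! (length p - 1 - t)" using pal_p unfolding palindrome_nth by blast
  have "U (x + (l - length p - t) + r) = U (x + (l - length p - t + r))" by (simp add: add.assoc)
  also have "\<dots> = U (x + (l - 1 - (l - length p - t + r)))"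
    using H[of "l - length p - t + r"] r assms(3) by linarith
  also have "\<dots> = U (x + t + (length p - 1 - r))" by (rule arg_cong[where f=U]) (use r assms(3) in arith)
  also have "\<dots> = p ! (length p - 1 - r)"
    using assms(2) unfolding occU_def by (rule allE[of _ "length p - 1 - r"]) (use r in simp)
  also have "\<dots> = p ! r" using pp[of r] r by simp
  finally show "U (x + (l - length p - t) + r) = p ! r" .
qed

end

locale main = pret_u +
  fixes N0 assumes good_u: "good u N0"
begin


lemma LongU: "\<exists>T. \<forall>n\<ge>T. length (lps (pref u (Suc n))) \<ge> B"
proof -
  define F where "F = {x :: bool list. length x < B \<and> (\<exists>K. x \<in> factors (pref u K))}"
  have fin: "finite F"
  proof -
    have "F \<subseteq> {xs. set xs \<subseteq> UNIV \<and> length xs \<le> B}" unfolding F_def by auto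
    moreover have "finite {xs :: bool list. set xs \<subseteq> UNIV \<and> length xs \<le> B}"
      by (rule finite_lists_length_le) simp
    ultimately show ?thesis by (rule finite_subset)
  qed
  define fo where "fo x = (LEAST K. x \<in> factors (pref u K))" for x
  define T where "T = Max (insert 0 (fo ` F)) + N0"
  have "length (lps (pref u (Suc n))) \<ge> B" if n: "n \<ge> T" for n
  proof (rule ccontr)
    assume "\<not> length (lps (pref u (Suc n))) \<ge> B"
    then have LF: "lps (pref u (Suc n)) \<in> F" unfolding F_def using lps_factor[of u "Suc n"]
      by (auto intro!: exI[of _ "Suc n"])
    let ?L = "lps (pref u (Suc n))"
    have "?L \<in> factors (pref u (fo ?L))" unfolding fo_def
      by (rule LeastI_ex) (use LF F_def in blast)
    moreover have "fo ?L \<le> Max (insert 0 (fo ` F))" using LF fin by simp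
    then have "fo ?L \<le> n" using n unfolding T_def by simp
    ultimately have "?L \<in> factors (pref u n)" by (rule factors_pref_mono[rotated])
    moreover have "n \<ge> N0" using n unfolding T_def by simp
    ultimately show False using good_u unfolding good_def by blast
  qed
  then show ?thesis by blast
qed

end


lemma seg_outer: "seg g x (n + 2) = [g x] @ seg g (Suc x) n @ [g (Suc x + n)]"
  by (rule nth_equalityI) (auto simp: nth_append nth_Cons' seg_def)

context main
begin

lemma LongUU: "\<exists>T. \<forall>m\<ge>T. length (lps (pref U m)) \<ge> B"
proof -
  obtain T0 where T0: "\<forall>n\<ge>T0. length (lps (pref u (Suc n))) \<ge> B + 2" using LongU by blast
  define T where "T = Kf * (T0 + 2) + length p"
  have "length (lps (pref U m)) \<ge> B" if mT: "m \<ge> T" for m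
  proof -
    obtain j where j: "bb j \<le> m - length p" "m - length p < bb (Suc j)" using blk_find by blast
    have "Kf * (T0 + 2) < Kf * Suc j" using j(2) bb_le_K[of "Suc j"] mT unfolding T_def by linarith
    then have "T0 + 2 < Suc j" by (rule mult_left_less_imp_less) simp
    then have jT: "j \<ge> T0" by simp
    define lY where "lY = length (lps (pref u (Suc j)))"
    have lY: "lY \<le> Suc j" "palindrome (seg u (Suc j - lY) lY)"
      using lps_pref[where g=u and n="Suc j"] unfolding lY_def by auto
    have lYB: "lY \<ge> B + 2" using T0 jT unfolding lY_def by auto
    define i0 where "i0 = Suc j - lY"
    have pin: "palindrome (seg u (Suc i0) (lY - 2))" "u (i0 + (lY - 1)) = u i0"
      using pal_inner[OF lY(2)[folded i0_def]] lYB by simp_all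
    have ji0: "i0 + (lY - 1) = j" using lY lYB unfolding i0_def by simp
    have uj: "u j = u i0" using pin(2) ji0 by simp
    define i where "i = Suc i0"
    have ij: "i \<le> j" "j - i = lY - 2" using ji0 lYB unfolding i_def by auto
    define s where "s = m - length p - bb j"
    have s: "s < length (f (u j))" using j bb_Suc[of j] unfolding s_def by simp
    have si: "s \<le> bb i" unfolding i_def using bb_Suc[of i0] s uj by simp
    have r1: "seg U (bb j + length p) s = take s (rev (f (u j)))" using s by (intro after_p) simp
    have r2: "seg U (bb i - s) s = drop (length (f (u i0)) - s) (f (u i0))"
      unfolding i_def using s uj by (intro last_block) simp
    have "rev (seg U (bb i - s) s) = take s (rev (f (u j)))" unfolding r2 rev_drop using s uj by simp
    then have r: "seg U (bb j + length p) s = rev (seg U (bb i - s) s)" using r1 by simp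
    have pi: "palindrome (seg u i (j - i))" using pin(1) ij unfolding i_def by simp
    have pc: "palindrome (seg U (bb i - s) (bb j - bb i + length p + 2 * s))"
      by (rule con[OF ij(1) pi si r])
    have bij: "bb i \<le> bb j" using ij(1) by (simp add: bb_le_iff)
    have mp: "length p \<le> m" using mT unfolding T_def by simp
    obtain d where d: "bb j = bb i + d" using bij le_Suc_ex by blast
    obtain c where c: "bb i = c + s" using si le_Suc_ex by (metis add.commute)
    have m_eq: "m = bb j + length p + s" unfolding s_def using j(1) mp by arith
    have le: "bb i - s \<le> m" unfolding m_eq d c by simp
    have e: "m - (bb i - s) = bb j - bb i + length p + 2 * s" unfolding m_eq d c by simp
    have "bb j - bb i + length p + 2 * s \<le> length (lps (pref U m))"
      using lps_pref(4)[where g=U and n=m, OF le] pc unfolding e by simp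
    moreover have "i + (j - i) = j" using ij(1) by simp
    then have "bb j \<ge> bb i + (j - i)" using bb_diff_ge[of i "j - i"] by simp
    ultimately show ?thesis using ij(2) lYB d by simp
  qed
  then show ?thesis by blast
qed

end


context main
begin

theorem main_good: "\<exists>N. good U N"
proof -
  define B0 where "B0 = 2 * Kf + length p + Kf * (N0 + 3)"
  obtain T where T: "\<forall>m\<ge>T. length (lps (pref U m)) \<ge> B0" using LongUU by blast
  have "lps (pref U (Suc m)) \<notin> factors (pref U m)" if mT: "m \<ge> T" for m
  proof
    assume bad: "lps (pref U (Suc m)) \<in> factors (pref U m)"
    define m' where "m' = Suc m"
    define l where "l = length (lps (pref U m'))"
    define x0 where "x0 = m' - l"
    have lB: "l \<ge> B0" using T mT unfolding l_def m'_def by auto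
    have lm: "l \<le> m'" and Pdef: "lps (pref U m') = seg U x0 l" and palP: "palindrome (seg U x0 l)"
      and maxP: "\<And>y. y \<le> m' \<Longrightarrow> palindrome (seg U y (m' - y)) \<Longrightarrow> m' - y \<le> l"
      using lps_pref[where g=U and n=m'] unfolding l_def x0_def by auto
    have x0l: "x0 + l = m'" using lm unfolding x0_def by simp
    obtain x1 where x1: "x1 + l \<le> m" "seg U x1 l = seg U x0 l"
      using bad unfolding factors_pref m'_def[symmetric] Pdef by auto
    have eqP: "U (x1 + t) = U (x0 + t)" if "t < l" for t
      using x1(2) that unfolding seg_eq_iff by auto
    have x10: "x1 < x0" using x1(1) x0l unfolding m'_def by simp
    obtain i s where is1: "x0 + s = bb i" and is2: "s = 0 \<or> (0 < i \<and> s < length (f (u (i - 1))))"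
      and is3: "\<forall>t<s. \<not> occU (x0 + t)" and is4: "s < Kf"
      using first_occ[of x0] by blast
    have se: "2 * s + length p \<le> l" using lB is4 unfolding B0_def by simp
    define e where "e = l - length p - s"
    have le: "l = e + length p + s" and se2: "s \<le> e" using se unfolding e_def by auto
    have occe: "occU (x0 + e)"
    proof -
      have "occU (x0 + (l - length p - s))" using pal_sym_occ[OF palP, of s] occ_bb[of i] is1 se by simp
      then show ?thesis unfolding e_def .
    qed
    obtain j where j: "x0 + e = bb j" using sync occe by metis
    have ij: "i \<le> j" using is1 j se2 by (metis add_le_cancel_left bb_le_iff)
    have m'j: "m' = bb j + length p + s" using x0l le j by simp
    have noafter: "\<not> occU (x0 + t)" if "e < t" "t + length p \<le> l" for t
    proof
      assume "occU (x0 + t)"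
      then have "occU (x0 + (l - length p - t))" using pal_sym_occ[OF palP] that by simp
      moreover have "l - length p - t < s" using that le by simp
      ultimately show False using is3 by blast
    qed
    have sj: "s < length (f (u j))"
    proof (rule ccontr)
      assume "\<not> s < length (f (u j))"
      then have a: "length (f (u j)) \<le> s" by simp
      have "bb (Suc j) = x0 + (e + length (f (u j)))" using bb_Suc[of j] j by simp
      then have "occU (x0 + (e + length (f (u j))))" using occ_bb[of "Suc j"] by simp
      moreover have "e < e + length (f (u j))" using f_pos[of "u j"] by simp
      moreover have "e + length (f (u j)) + length p \<le> l" using a le by simp
      ultimately show False using noafter by blast
    qed
    define a where "a = seg U x0 s"
    define w where "w = seg u i (j - i)"
    have lw: "length w = j - i" unfolding w_def by simp
    have bjw: "bb j = bb i + length (morph f w)" using bb_add[of i "j - i"] ij unfolding w_def by simp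
    have bji: "bb j - bb i = e - s" using is1 j by simp
    have Psplit: "seg U x0 l = a @ seg U (bb i) (bb j - bb i + length p) @ seg U (bb j + length p) s"
    proof -
      have "l = s + ((bb j - bb i + length p) + s)" using le bji se2 by simp
      then have "seg U x0 l = seg U x0 s @ seg U (x0 + s) ((bb j - bb i + length p) + s)" by (simp add: seg_add)
      also have "seg U (x0 + s) ((bb j - bb i + length p) + s) = seg U (bb i) (bb j - bb i + length p) @ seg U (bb j + length p) s"
      proof -
        have "bb i \<le> bb j" using ij by (simp add: bb_le_iff)
        then show ?thesis unfolding seg_add is1 by simp
      qed
      finally show ?thesis unfolding a_def .
    qed
    have mid: "seg U (bb i) (bb j - bb i + length p) = morph f w @ p"
      using blockseg[of i "j - i"] bjw unfolding w_def by simp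
    have PP: "palindrome (a @ seg U (bb i) (bb j - bb i + length p) @ seg U (bb j + length p) s)"
      using palP unfolding Psplit .
    have la: "length a = length (seg U (bb j + length p) s)" unfolding a_def by simp
    have palw: "palindrome w" using pal_split(1)[OF PP la] unfolding mid pal_morph .
    have endrev: "seg U (bb j + length p) s = rev a" using pal_split(2)[OF PP la] .
    have lenw: "j - i \<ge> N0 + 3"
    proof -
      have "bb (i + (j - i)) \<le> bb i + Kf * (j - i)" by (rule bb_diff_le)
      then have "bb j - bb i \<le> Kf * (j - i)" using ij by simp
      then have "l \<le> 2 * Kf + Kf * (j - i) + length p" using le bji is4 by simp
      then have "Kf * (N0 + 3) \<le> Kf * (j - i)" using lB unfolding B0_def by linarith
      then show ?thesis using K_pos by simp
    qed
    have occ1: "occU (x1 + s)" unfolding occU_def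
    proof (intro allI impI)
      fix t assume t: "t < length p"
      have "U (x1 + s + t) = U (x0 + (s + t))" using eqP[of "s + t"] t se by (simp add: add.assoc)
      also have "\<dots> = U (bb i + t)" by (metis is1 add.assoc)
      also have "\<dots> = p ! t" using occ_bb[of i] t unfolding occU_def by simp
      finally show "U (x1 + s + t) = p ! t" .
    qed
    obtain i' where i': "x1 + s = bb i'" using sync occ1 by metis
    have i'i: "i' < i" using i' is1 x10 by (metis add_less_cancel_right bb_less_iff)
    have wi': "seg u i' (j - i) = w"
    proof -
      have L: "length (morph f w) + length p = bb j - bb i + length p" using bjw by simp
      have "seg U (bb i') (length (morph f w) + length p) = seg U (bb i) (length (morph f w) + length p)"
      proof (rule seg_cong)
        fix t assume t: "t < length (morph f w) + length p"
        have "s + t < l" using t L le bji se2 by simp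
        then have "U (x1 + (s + t)) = U (x0 + (s + t))" by (rule eqP)
        then show "U (bb i' + t) = U (bb i + t)" by (metis i' is1 add.assoc)
      qed
      also have "\<dots> = morph f w @ p" using mid L by simp
      finally show ?thesis using decode lw by metis
    qed
    have a1: "seg U x1 s = a" unfolding a_def by (rule seg_cong) (use eqP se in simp)
    have lastb: "seg U (bb k - s) s = drop (length (f (u (k - 1))) - s) (f (u (k - 1)))"
      if "0 < k" "s \<le> length (f (u (k - 1)))" for k
      using last_block[of s "k - 1"] that by simp
    have no_longer: "i \<le> i3" if h: "i3 \<le> j" "palindrome (seg u i3 (j - i3))" "s \<le> bb i3"
      "seg U (bb i3 - s) s = a" for i3
    proof -
      have r: "seg U (bb j + length p) s = rev (seg U (bb i3 - s) s)" using endrev h(4) by simp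
      have pc: "palindrome (seg U (bb i3 - s) (bb j - bb i3 + length p + 2 * s))"
        by (rule con[OF h(1-3) r])
      have b3: "bb i3 \<le> bb j" using h(1) by (simp add: bb_le_iff)
      obtain c where c: "bb i3 = c + s" using h(3) le_Suc_ex by (metis add.commute)
      obtain d where d: "bb j = bb i3 + d" using b3 le_Suc_ex by blast
      have y: "bb i3 - s \<le> m'" unfolding m'j d c by simp
      have "m' - (bb i3 - s) = bb j - bb i3 + length p + 2 * s" unfolding m'j d c by simp
      then have "bb j - bb i3 + length p + 2 * s \<le> l" using maxP[OF y] pc by simp
      moreover have "bb i \<le> bb j" using ij by (simp add: bb_le_iff)
      ultimately have "bb i \<le> bb i3" using le bji se2 b3 by linarith
      then show ?thesis by (simp add: bb_le_iff)
    qed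
    have jpos: "j = Suc (j - 1)" using lenw by simp
    have w_ne: "j - i \<ge> 1" using lenw by simp
    show False
    proof (cases "\<forall>b. s \<le> length (f b) \<and> drop (length (f b) - s) (f b) = a")
      case C1: True
      define ly where "ly = length (lps (pref u j))"
      have gy: "lps (pref u j) \<notin> factors (pref u (j - 1))"
      proof -
        have "j - 1 \<ge> N0" using lenw ij by simp
        then have "lps (pref u (Suc (j - 1))) \<notin> factors (pref u (j - 1))" using good_u unfolding good_def by blast
        then show ?thesis unfolding jpos[symmetric] .
      qed
      have ly: "ly \<le> j" "lps (pref u j) = seg u (j - ly) ly" "palindrome (seg u (j - ly) ly)"
        and maxY: "\<And>y. y \<le> j \<Longrightarrow> palindrome (seg u y (j - y)) \<Longrightarrow> j - y \<le> ly"
        using lps_pref[where g=u and n=j] unfolding ly_def by auto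
      define i2 where "i2 = j - ly"
      have "j - i \<le> ly" using maxY[OF ij] palw unfolding w_def by simp
      then have i2i: "i2 \<le> i" unfolding i2_def using ij by simp
      have waf: "w \<in> factors (pref u (j - 1))"
        unfolding factors_pref lw using wi' i'i ij by (intro exI[of _ i']) auto
      show False
      proof (cases "0 < i2 \<or> s = 0")
        case True
        have sa: "s \<le> bb i2 \<and> seg U (bb i2 - s) s = a"
        proof (cases "s = 0")
          case True then show ?thesis unfolding a_def by simp
        next
          case False
          then have i20: "0 < i2" using \<open>0 < i2 \<or> s = 0\<close> by simp
          have "bb i2 = bb (i2 - 1) + length (f (u (i2 - 1)))" using bb_Suc[of "i2 - 1"] i20 by simp
          moreover have "s \<le> length (f (u (i2 - 1)))" using C1 by blast
          ultimately have "s \<le> bb i2" by simp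
          moreover have "seg U (bb i2 - s) s = a" using lastb[OF i20 \<open>s \<le> length (f (u (i2 - 1)))\<close>] C1 by simp
          ultimately show ?thesis by simp
        qed
        have ji2: "j - i2 = ly" using ly(1) unfolding i2_def by simp
        have i2j: "i2 \<le> j" unfolding i2_def by simp
        have pal2: "palindrome (seg u i2 (j - i2))" using ly(3) ji2 unfolding i2_def by simp
        have "i \<le> i2" using no_longer[OF i2j pal2] sa by blast
        then have "i2 = i" using i2i by simp
        then have "lps (pref u j) = w" using ly(2) ji2 unfolding w_def i2_def by simp
        then show False using gy waf by simp
      next
        case False
        then have s0: "0 < s" and i20: "i2 = 0" by auto
        have i0: "0 < i" using is2 s0 by simp
        have i'0: "0 < i'" using i' s0 by (metis add_gr_0 bb_0 gr0I)
        have lyj: "ly = j" using i20 ly(1) unfolding i2_def by simp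
        have palY: "palindrome (seg u 0 j)" using ly(3) lyj by simp
        have w0: "seg u 0 (j - i) = w"
        proof -
          have "seg u 0 (j - i) = seg u (0 + (j - (j - i))) (j - i)"
            by (rule pal_suffix_prefix[OF palY]) (use palw ij in \<open>simp_all add: w_def\<close>)
          then show ?thesis using ij unfolding w_def by simp
        qed
        define i1 where "i1 = (LEAST k. 0 < k \<and> seg u k (j - i) = w)"
        have i1: "0 < i1 \<and> seg u i1 (j - i) = w" unfolding i1_def
          by (rule LeastI[of _ i']) (use i'0 wi' in simp)
        have i1i': "i1 \<le> i'" unfolding i1_def by (rule Least_le) (use i'0 wi' in simp)
        define e' where "e' = i1 + (j - i)"
        have gz: "lps (pref u e') \<notin> factors (pref u (e' - 1))"
        proof -
          have "e' - 1 \<ge> N0" using lenw i1 unfolding e'_def by simp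
          moreover have "Suc (e' - 1) = e'" using i1 unfolding e'_def by simp
          ultimately show ?thesis using good_u unfolding good_def by metis
        qed
        define lz where "lz = length (lps (pref u e'))"
        have lz: "lz \<le> e'" "lps (pref u e') = seg u (e' - lz) lz" "palindrome (seg u (e' - lz) lz)"
          and maxZ: "\<And>y. y \<le> e' \<Longrightarrow> palindrome (seg u y (e' - y)) \<Longrightarrow> e' - y \<le> lz"
          using lps_pref[where g=u and n=e'] unfolding lz_def by auto
        have wlz: "j - i \<le> lz" using maxZ[of i1] i1 palw unfolding e'_def by simp
        have wf: "w \<in> factors (pref u (e' - 1))"
          unfolding factors_pref lw using w0 i1 unfolding e'_def by (intro exI[of _ 0]) auto
        have "lz \<noteq> j - i"
        proof
          assume "lz = j - i"
          then have "lps (pref u e') = w" using lz(2) i1 unfolding e'_def by simp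
          then show False using gz wf by simp
        qed
        then have wlz2: "j - i < lz" using wlz by simp
        define z0 where "z0 = e' - lz"
        have z0i1: "z0 < i1" using wlz2 lz(1) unfolding z0_def e'_def by simp
        have zi: "z0 + (lz - (j - i)) = i1" using wlz2 lz(1) unfolding z0_def e'_def by simp
        have "seg u z0 (j - i) = seg u (z0 + (lz - (j - i))) (j - i)"
          by (rule pal_suffix_prefix) (use lz(3) wlz i1 palw zi in \<open>simp_all add: z0_def\<close>)
        also have "z0 + (lz - (j - i)) = i1" by (rule zi)
        finally have "seg u z0 (j - i) = w" using i1 by simp
        then have "z0 = 0"
        proof (rule contrapos_pp)
          assume "z0 \<noteq> 0"
          then have "i1 \<le> z0" unfolding i1_def using \<open>seg u z0 (j - i) = w\<close> by (intro Least_le) simp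
          then show "seg u z0 (j - i) \<noteq> w" using z0i1 by simp
        qed
        then have lze: "lz = e'" using lz(1) unfolding z0_def by simp
        have palZ: "palindrome (seg u 0 e')" using lz(3) lze by simp
        have e'j: "e' < j" using i1i' i'i ij unfolding e'_def by simp
        define i3 where "i3 = j - e'"
        have pal3: "palindrome (seg u i3 (j - i3))"
          using pal_prefix_suffix[OF palY _ palZ] e'j unfolding i3_def by simp
        have i3: "0 < i3" "i3 < i" using e'j i1 ij unfolding i3_def e'_def by auto
        have "bb i3 = bb (i3 - 1) + length (f (u (i3 - 1)))" using bb_Suc[of "i3 - 1"] i3 by simp
        moreover have s3': "s \<le> length (f (u (i3 - 1)))" using C1 by blast
        ultimately have s3: "s \<le> bb i3" by simp
        have a3: "seg U (bb i3 - s) s = a" using lastb[OF i3(1) s3'] C1 by simp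
        have "i \<le> i3" by (rule no_longer[OF _ pal3 s3 a3]) (use i3 ij in simp)
        then show False using i3 by simp
      qed
    next
      case C2: False
      have s0: "0 < s"
      proof (rule ccontr)
        assume "\<not> 0 < s"
        then have "s = 0" by simp
        then have "\<forall>b. s \<le> length (f b) \<and> drop (length (f b) - s) (f b) = a" unfolding a_def by simp
        then show False using C2 by simp
      qed
      have i0: "0 < i" and sfc: "s < length (f (u (i - 1)))" using is2 s0 by auto
      define c where "c = u (i - 1)"
      have ac: "drop (length (f c) - s) (f c) = a"
      proof -
        have "x0 = bb i - s" using is1 by simp
        then have "a = seg U (bb i - s) s" unfolding a_def by simp
        also have "\<dots> = drop (length (f c) - s) (f c)" unfolding c_def using lastb[OF i0] sfc by simp
        finally show ?thesis by simp
      qed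
      have uniq: "b = c" if hb: "s \<le> length (f b)" "drop (length (f b) - s) (f b) = a" for b
      proof (rule ccontr)
        assume "b \<noteq> c"
        then have "\<forall>b'. b' = b \<or> b' = c" by auto
        have "s \<le> length (f b') \<and> drop (length (f b') - s) (f b') = a" for b'
        proof -
          have "b' = b \<or> b' = c" using \<open>\<forall>b'. b' = b \<or> b' = c\<close> by blast
          then show ?thesis
          proof
            assume "b' = b" then show ?thesis using hb by simp
          next
            assume "b' = c" then show ?thesis using ac sfc unfolding c_def by simp
          qed
        qed
        then have "\<forall>b'. s \<le> length (f b') \<and> drop (length (f b') - s) (f b') = a" by blast
        then show False using C2 by simp
      qed
      have tr: "drop (length (f b) - s) (f b) = a" if "s \<le> length (f b)" "seg U (k + length p) s = rev a"
        "seg U (k + length p) s = take s (rev (f b))" for b k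
      proof -
        have "take s (rev (f b)) = rev (drop (length (f b) - s) (f b))" using that(1) by (simp add: rev_drop)
        then show ?thesis using that(2,3) by simp
      qed
      have ujc: "u j = c"
      proof (rule uniq)
        show sl: "s \<le> length (f (u j))" using sj by simp
        show "drop (length (f (u j)) - s) (f (u j)) = a" by (rule tr[OF sl endrev after_p[OF sl]])
      qed
      have i'0: "0 < i'" using i' s0 by (metis add_gr_0 bb_0 gr0I)
      have transfer: "occU (x0 + t)" if ht: "t + length p \<le> l" "occU (x1 + t)" for t
        unfolding occU_def
      proof (intro allI impI)
        fix r assume r: "r < length p"
        have "U (x0 + (t + r)) = U (x1 + (t + r))" using eqP[of "t + r"] r ht(1) by simp
        also have "\<dots> = p ! r" using ht(2) r unfolding occU_def by (simp add: add.assoc)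
        finally show "U (x0 + t + r) = p ! r" by (simp add: add.assoc)
      qed
      have sfi': "s < length (f (u (i' - 1)))"
      proof (rule ccontr)
        assume "\<not> s < length (f (u (i' - 1)))"
        then have fl: "length (f (u (i' - 1))) \<le> s" by simp
        have bs: "bb i' = bb (i' - 1) + length (f (u (i' - 1)))" using bb_Suc[of "i' - 1"] i'0 by simp
        define t' where "t' = bb (i' - 1) - x1"
        have xt: "x1 + t' = bb (i' - 1)" unfolding t'_def using bs fl i' by simp
        have fp: "0 < length (f (u (i' - 1)))" by (rule f_pos)
        have ts: "t' < s" unfolding t'_def using bs fl i' fp by linarith
        have "occU (x1 + t')" unfolding xt by (rule occ_bb)
        then have "occU (x0 + t')" using transfer ts se by simp
        then show False using is3 ts by blast
      qed
      have ui'c: "u (i' - 1) = c"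
      proof (rule uniq)
        show "s \<le> length (f (u (i' - 1)))" using sfi' by simp
        have "x1 = bb i' - s" using i' by simp
        then have "a = seg U (bb i' - s) s" using a1 by simp
        also have "\<dots> = drop (length (f (u (i' - 1))) - s) (f (u (i' - 1)))" using lastb[OF i'0] sfi' by simp
        finally show "drop (length (f (u (i' - 1))) - s) (f (u (i' - 1))) = a" by simp
      qed
      define j' where "j' = i' + (j - i)"
      have bj': "bb j' = x1 + e"
      proof -
        have "bb j' = bb i' + length (morph f w)" using bb_add[of i' "j - i"] wi' unfolding j'_def by simp
        then show ?thesis using i' bjw bji is1 j se2 by simp
      qed
      have sfj': "s < length (f (u j'))"
      proof (rule ccontr)
        assume "\<not> s < length (f (u j'))"
        then have fl: "length (f (u j')) \<le> s" by simp
        have xt: "x1 + (e + length (f (u j'))) = bb (Suc j')" using bb_Suc[of j'] bj' by simp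
        have "occU (x1 + (e + length (f (u j'))))" unfolding xt by (rule occ_bb)
        moreover have "e + length (f (u j')) + length p \<le> l" using fl le by simp
        ultimately have "occU (x0 + (e + length (f (u j'))))" using transfer by simp
        moreover have "e < e + length (f (u j'))" using f_pos[of "u j'"] by simp
        ultimately show False using noafter \<open>e + length (f (u j')) + length p \<le> l\<close> by blast
      qed
      have uj'c: "u j' = c"
      proof (rule uniq)
        show "s \<le> length (f (u j'))" using sfj' by simp
        have "seg U (bb j' + length p) s = seg U (bb j + length p) s"
        proof (rule seg_cong)
          fix t assume t: "t < s"
          have "U (x1 + (e + length p + t)) = U (x0 + (e + length p + t))" using t le by (intro eqP) simp
          moreover have "x1 + (e + length p + t) = bb j' + length p + t" using bj' by simp
          moreover have "x0 + (e + length p + t) = bb j + length p + t" using j by simp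
          ultimately show "U (bb j' + length p + t) = U (bb j + length p + t)" by metis
        qed
        then have "seg U (bb j' + length p) s = rev a" using endrev by simp
        moreover have sl: "s \<le> length (f (u j'))" using sfj' by simp
        ultimately show "drop (length (f (u j')) - s) (f (u j')) = a"
          by (intro tr[OF sl _ after_p[OF sl]])
      qed
      define v where "v = seg u (i - 1) (j - i + 2)"
      have v1: "v = [c] @ w @ [c]"
        unfolding v_def w_def seg_outer c_def using i0 ij ujc[symmetric] by (simp add: c_def)
      have palv: "palindrome v" unfolding v1 using pal_append3[OF palw, of "[c]"] by simp
      have vf: "v \<in> factors (pref u j)"
      proof -
        have "seg u (i' - 1) (j - i + 2) = [u (i' - 1)] @ seg u i' (j - i) @ [u j']"
          unfolding seg_outer using i'0 unfolding j'_def by simp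
        then have "seg u (i' - 1) (length v) = v" unfolding v1 wi' ui'c uj'c using lw by simp
        moreover have "i' - 1 + length v \<le> j" unfolding v1 using i'i ij i'0 lw by simp
        ultimately show ?thesis unfolding factors_pref by blast
      qed
      have gY: "lps (pref u (Suc j)) \<notin> factors (pref u j)" using good_u lenw unfolding good_def by simp
      define lY where "lY = length (lps (pref u (Suc j)))"
      have lY: "lY \<le> Suc j" "lps (pref u (Suc j)) = seg u (Suc j - lY) lY" "palindrome (seg u (Suc j - lY) lY)"
        and maxY: "\<And>y. y \<le> Suc j \<Longrightarrow> palindrome (seg u y (Suc j - y)) \<Longrightarrow> Suc j - y \<le> lY"
        using lps_pref[where g=u and n="Suc j"] unfolding lY_def by auto
      have ve: "Suc j - (i - 1) = j - i + 2" using i0 ij by simp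
      have pv: "palindrome (seg u (i - 1) (Suc j - (i - 1)))" unfolding ve using palv unfolding v_def .
      have "Suc j - (i - 1) \<le> lY" by (rule maxY[OF _ pv]) (use ij in simp)
      then have "j - i + 2 \<le> lY" unfolding ve .
      moreover have "lY \<noteq> j - i + 2"
      proof
        assume "lY = j - i + 2"
        moreover have "Suc j - (j - i + 2) = i - 1" using i0 ij by simp
        ultimately have "lps (pref u (Suc j)) = v" using lY(2) unfolding v_def by simp
        then show False using gY vf by simp
      qed
      ultimately have lY2: "j - i + 2 < lY" by simp
      define i0' where "i0' = Suc j - lY"
      have pin: "palindrome (seg u (Suc i0') (lY - 2))" "u (i0' + (lY - 1)) = u i0'"
        using pal_inner[OF lY(3)[folded i0'_def]] lY2 by simp_all
      have ji0: "i0' + (lY - 1) = j" using lY(1) lY2 unfolding i0'_def by simp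
      have ui0: "u i0' = c" using pin(2) ji0 ujc by simp
      define i3 where "i3 = Suc i0'"
      have i3i: "i3 < i" using lY2 lY(1) ij i0 unfolding i3_def i0'_def by simp
      have i3j: "i3 \<le> j" and ji3: "j - i3 = lY - 2" using ji0 lY2 unfolding i3_def by auto
      have pal3: "palindrome (seg u i3 (j - i3))" using pin(1) ji3 unfolding i3_def by simp
      have fi0: "s \<le> length (f (u (i3 - 1)))" using sfc ui0 unfolding i3_def c_def by simp
      have s3: "s \<le> bb i3" using bb_Suc[of i0'] fi0 unfolding i3_def by simp
      have a3: "seg U (bb i3 - s) s = a" using lastb[of i3] fi0 ui0 ac unfolding i3_def by simp
      have "i \<le> i3" by (rule no_longer[OF i3j pal3 s3 a3])
      then show False using i3i by simp
    qed
  qed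
  then show ?thesis unfolding good_def by blast
qed

end


theorem proposition6p3:
  fixes u :: "nat \<Rightarrow> bool" and f :: "bool \<Rightarrow> 'a list"
  assumes "uniformly_recurrent u"
    and "defect_inf u < \<infinity>"
    and "class_P_ret f"
  shows "defect_inf (morph_inf f u) < \<infinity>"
proof -
  obtain N0 where g: "good u N0" using finite_defect_good[OF assms(2)] by blast
  obtain p where p: "palindrome p" "\<forall>b. palindrome (f b @ p)"
    "\<forall>b. card (occurrences p (f b @ p)) = 2 \<and> occurrences p (f b @ p) = {0, length (f b)}" "inj f"
    using assms(3) unfolding class_P_ret_def by blast
  have ne: "f b \<noteq> []" for b
  proof
    assume "f b = []"
    have "occurrences p (f b @ p) = {0, length (f b)}" using p(3) by blast
    then have "occurrences p (f b @ p) = {0}" using \<open>f b = []\<close> by simp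
    moreover have "card (occurrences p (f b @ p)) = 2" using p(3) by blast
    ultimately show False by simp
  qed
  interpret main f p u N0
    by unfold_locales (use p ne g in auto)
  obtain N where "good U N" using main_good by blast
  then show ?thesis using good_finite_defect unfolding U_def by blast
qed


end
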